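(* For positive integers $\ell,m$, let $A(\ell,m)$ be the $(\ell+m)\times(\ell+m)$ coloring matrix with entries $a_{ij}=0$ if $i,j>\ell$ and $a_{ij}=1$ otherwise. Then for all positive integers $\ell,m,n$ and $1\le i\le\ell$, $$t_{A(\ell,m)}^{(i)}(n)=\frac1n\sum_{k=1}^{n}(m-\ell)^{n-k}\ell^{k-1}\binom{n}{k}\binom{2n+k-2}{k-1};$$ for $\ell+1\le i\le\ell+m$ and $n\ge2$, $$t_{A(\ell,m)}^{(i)}(n)=\frac{1}{n-1}\sum_{k=1}^{n-1}(m-\ell)^{n-k-1}\ell^{k}\binom{n-1}{k}\binom{2n+k-2}{k-1};$$ and for $n\ge2$, $$t_{A(\ell,m)}(n)=\sum_{k=1}^{n}\frac{(2m-\ell)n-mk+(\ell-m)}{n(n-1)}(m-\ell)^{n-k-1}\ell^{k}\binom{n}{k}\binom{2n+k-2}{k-1}.$$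
   Context: A plane tree is an unlabeled rooted tree in which the children of every vertex are linearly ordered. A coloring matrix is a square matrix $A=(a_{ij})$ with entries in $\{0,1\}$. An $A$-coloring of a plane tree assigns to each vertex a color (an index of a row of $A$) such that whenever a vertex of color $j$ is a child of a vertex of color $i$, $a_{ij}=1$. Let $t_A(n)$ be the number of pairs (plane tree with $n$ vertices, $A$-coloring of it) and $t_A^{(i)}(n)$ the number of those with root color $i$. Here $0^0=1$. *)

theory Defs
  imports Complex_Main
begin

text \<open>A plane tree is a \<open>unit ptree\<close>; a pair
  (plane tree, coloring) is the same thing as a \<open>nat ptree\<close> whose labels
  are the colors.\<close>
datatype 'a ptree = PNode 'a "'a ptree list"

fun nverts :: "'a ptree \<Rightarrow> nat" where
  "nverts (PNode c ts) = 1 + sum_list (map nverts ts)"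

fun root_label :: "'a ptree \<Rightarrow> 'a" where
  "root_label (PNode c ts) = c"

text \<open>A coloring matrix of size N is a 0/1 matrix, given as a predicate
  \<open>A i j\<close> (meaning a_ij = 1) on indices 1..N.\<close>
fun A_colored :: "nat \<Rightarrow> (nat \<Rightarrow> nat \<Rightarrow> bool) \<Rightarrow> nat ptree \<Rightarrow> bool" where
  "A_colored N A (PNode c ts) =
     (c \<in> {1..N} \<and> (\<forall>t\<in>set ts. A c (root_label t) \<and> A_colored N A t))"

definition t_A :: "nat \<Rightarrow> (nat \<Rightarrow> nat \<Rightarrow> bool) \<Rightarrow> nat \<Rightarrow> nat" where
  "t_A N A n = card {T. A_colored N A T \<and> nverts T = n}"

definition t_A_root :: "nat \<Rightarrow> (nat \<Rightarrow> nat \<Rightarrow> bool) \<Rightarrow> nat \<Rightarrow> nat \<Rightarrow> nat" where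
  "t_A_root N A i n = card {T. A_colored N A T \<and> root_label T = i \<and> nverts T = n}"

definition A_lm :: "nat \<Rightarrow> nat \<Rightarrow> nat \<Rightarrow> nat \<Rightarrow> bool" where
  "A_lm l m i j = (\<not> (i > l \<and> j > l))"

end

theory Submission
  imports Defs "HOL-Computational_Algebra.Formal_Laurent_Series"
begin

unbundle fps_syntax




lemma fls_Xint_neg: "fls_X_intpow (- int n) = (inverse (fls_X :: real fls)) ^ n"
  by (simp add: fls_inverse_X fls_X_inv_power_conv_shift_1) 

lemma key_residue:
  fixes w \<phi> :: "real fps"
  assumes wphi: "w * \<phi> = fps_X" and p0: "\<phi> $ 0 \<noteq> 0" and j: "1 \<le> j" "j \<le> n"
  shows "(w^(j-1) * fps_deriv w * \<phi>^n) $ (n-1) = (if j = n then 1 else 0)"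
proof -
  define W where "W = fps_to_fls w"
  define P where "P = fps_to_fls \<phi>"
  have WP: "W * P = fls_X" unfolding W_def P_def
    by (metis fls_times_fps_to_fls wphi fps_X_to_fls)
  have W0: "W \<noteq> 0" using WP by auto
  have w0: "w $ 0 = 0" using arg_cong[OF wphi, of "\<lambda>f. f $ 0"] p0 by simp
  have w1: "w $ 1 \<noteq> 0" using arg_cong[OF wphi, of "\<lambda>f. f $ 1"] w0
    by (auto simp: fps_mult_nth numeral_2_eq_2)
  have sdw: "subdegree w = 1"
    using w0 w1 by (metis One_nat_def subdegreeI less_one)
  have Pn: "fls_X_intpow (- int n) * P^n = (inverse W)^n"
  proof -
    have PX: "P = fls_X * inverse W" using WP W0 by (metis mult.commute nonzero_eq_divide_eq divide_inverse)
    have X0: "(fls_X :: real fls) \<noteq> 0" by simp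
    have "fls_X_intpow (- int n) * P^n = (inverse fls_X)^n * (fls_X * inverse W)^n"
      using PX fls_Xint_neg by simp
    also have "\<dots> = (inverse fls_X * fls_X)^n * (inverse W)^n"
      by (metis power_mult_distrib mult.assoc)
    also have "\<dots> = (inverse W)^n" using X0 by (metis left_inverse power_one mult_1)
    finally show ?thesis .
  qed
  have "(w^(j-1) * fps_deriv w * \<phi>^n) $ (n-1)
        = fps_to_fls (w^(j-1) * fps_deriv w * \<phi>^n) $$ (int n - 1)" using j by (simp add: nat_diff_distrib)
  also have "\<dots> = fls_residue (fls_X_intpow (- int n) * fps_to_fls (w^(j-1) * fps_deriv w * \<phi>^n))"
    using fls_residue_shift_nth[of "fps_to_fls (w^(j-1) * fps_deriv w * \<phi>^n)" "int n - 1"] by simp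
  also have "\<dots> = fls_residue (W^(j-1) * fls_deriv W * (fls_X_intpow (- int n) * P^n))"
    unfolding W_def P_def
    by (simp add: fls_times_fps_to_fls fps_to_fls_power fls_deriv_fps_to_fls ac_simps)
  also have "\<dots> = fls_residue (fls_deriv W * (inverse W)^(n-j+1))"
  proof -
    have "W^(j-1) * (inverse W)^n = (inverse W)^(n-j+1)"
    proof -
      have "(inverse W)^n = (inverse W)^(j-1) * (inverse W)^(n-j+1)"
        using j by (simp only: power_add[symmetric]) (simp add: algebra_simps)
      thus ?thesis using W0 by (simp add: power_inverse field_simps)
    qed
    thus ?thesis using Pn by (metis mult.assoc mult.commute)
  qed
  also have "\<dots> = (if j = n then 1 else 0)"
  proof (cases "j = n")
    case True
    then show ?thesis
      using fls_residue_deriv_times_inverse_eq_subdegree(1)[of W]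
      by (simp add: W_def fls_subdegree_fls_to_fps sdw)
  next
    case False
    define s where "s = n - j"
    have s: "s \<ge> 1" "n - j + 1 = s + 1" using False j unfolding s_def by auto
    have "fls_deriv (fls_const (- 1 / of_nat s) * (inverse W)^s) = fls_deriv W * (inverse W)^(s+1)"
    proof -
      have "fls_deriv ((inverse W)^s) = of_nat s * (inverse W)^(s-1) * (- inverse W * fls_deriv W * inverse W)"
        by (simp add: fls_deriv_power fls_inverse_deriv_divring)
      also have "\<dots> = - of_nat s * fls_deriv W * (inverse W)^(s+1)"
        using s(1) by (cases s) (simp_all add: algebra_simps)
      finally have "fls_deriv ((inverse W)^s) = - of_nat s * fls_deriv W * (inverse W)^(s+1)" .
      hence "fls_deriv (fls_const (- 1 / of_nat s) * (inverse W)^s)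
          = (fls_const (- 1 / of_nat s) * fls_const (- of_nat s)) * (fls_deriv W * (inverse W)^(s+1))"
        by (simp only: fls_deriv_mult_const_left fls_of_nat fls_const_uminus) (simp only: mult_ac)
      also have "fls_const (- 1 / of_nat s) * fls_const (- of_nat s) = (1 :: real fls)"
        using s(1) by (simp only: fls_const_mult_const) simp
      finally show ?thesis by simp
    qed
    then show ?thesis using False s by (metis fls_residue_deriv)
  qed
  finally show ?thesis .
qed

lemma lagrange:
  fixes w \<phi> D H :: "real fps"
  assumes wphi: "w * \<phi> = fps_X" and p0: "\<phi> $ 0 \<noteq> 0" and DH: "D oo w = H" and n: "n > 0"
  shows "of_nat n * D $ n = (fps_deriv H * \<phi>^n) $ (n-1)"
proof -
  have w0: "w $ 0 = 0" using arg_cong[OF wphi, of "\<lambda>f. f $ 0"] p0 by simp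
  define P where "P = (\<Sum>j\<le>n. fps_const (D $ j) * w^j)"
  have HP: "H $ i = P $ i" if i: "i \<le> n" for i
  proof -
    have "H $ i = (\<Sum>j=0..i. D $ j * (w^j) $ i)" using DH fps_compose_nth by metis
    also have "\<dots> = (\<Sum>j\<le>n. D $ j * (w^j) $ i)"
    proof (rule sum.mono_neutral_left)
      show "\<forall>x\<in>{..n} - {0..i}. D $ x * w ^ x $ i = 0"
        using startsby_zero_power_prefix[OF w0] by auto
    qed (use i in auto)
    also have "\<dots> = P $ i" by (simp add: P_def fps_sum_nth)
    finally show ?thesis .
  qed
  have dHP: "(fps_deriv H) $ i = (fps_deriv P) $ i" if "i < n" for i
    using HP[of "i+1"] that by simp
  have "(fps_deriv H * \<phi>^n) $ (n-1) = (fps_deriv P * \<phi>^n) $ (n-1)"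
    unfolding fps_mult_nth by (intro sum.cong refl) (use dHP n in auto)
  also have "fps_deriv P = (\<Sum>j\<le>n. fps_const (D $ j * of_nat j) * (w^(j-1) * fps_deriv w))"
    unfolding P_def fps_deriv_sum
    by (intro sum.cong refl) (simp add: fps_deriv_power mult_ac del: fps_const_mult add: fps_const_mult[symmetric])
  also have "((\<Sum>j\<le>n. fps_const (D $ j * of_nat j) * (w^(j-1) * fps_deriv w)) * \<phi>^n) $ (n-1)
      = (\<Sum>j\<le>n. D $ j * of_nat j * (w^(j-1) * fps_deriv w * \<phi>^n) $ (n-1))"
    by (simp add: sum_distrib_right fps_sum_nth mult.assoc)
  also have "\<dots> = (\<Sum>j\<le>n. if j = n then D $ j * of_nat j else 0)"
  proof (intro sum.cong refl)
    fix j assume "j \<in> {..n}"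
    then show "D $ j * of_nat j * (w^(j-1) * fps_deriv w * \<phi>^n) $ (n-1) = (if j = n then D $ j * of_nat j else 0)"
      using key_residue[OF wphi p0, of j n] by (cases "j = 0") auto
  qed
  also have "\<dots> = of_nat n * D $ n" by simp
  finally show ?thesis by simp
qed




definition LS :: "nat ptree set \<Rightarrow> nat \<Rightarrow> nat ptree list set" where
  "LS S n = {ts. set ts \<subseteq> S \<and> sum_list (map nverts ts) = n}"

lemma nverts_pos: "nverts t \<ge> 1"
  by (cases t) auto

lemma LS_0: "LS S 0 = {[]}"
proof -
  have "ts = []" if "sum_list (map nverts ts) = 0" for ts
    using that nverts_pos[of "hd ts"] by (cases ts) auto
  thus ?thesis unfolding LS_def by auto
qed

lemma LS_Suc: "LS S (Suc n) = (\<Union>k\<in>{1..Suc n}. (\<lambda>(t,ts). t#ts) ` ({t\<in>S. nverts t = k} \<times> LS S (Suc n - k)))"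
proof (intro equalityI subsetI)
  fix ts assume "ts \<in> LS S (Suc n)"
  then have ts: "set ts \<subseteq> S" "sum_list (map nverts ts) = Suc n" by (auto simp: LS_def)
  then obtain t ts' where tt: "ts = t # ts'" by (cases ts) auto
  have "nverts t \<in> {1..Suc n}" using ts tt nverts_pos[of t] by auto
  moreover have "(t, ts') \<in> {t\<in>S. nverts t = nverts t} \<times> LS S (Suc n - nverts t)"
    using ts tt by (auto simp: LS_def)
  ultimately show "ts \<in> (\<Union>k\<in>{1..Suc n}. (\<lambda>(t,ts). t#ts) ` ({t\<in>S. nverts t = k} \<times> LS S (Suc n - k)))"
    using tt by blast
next
  fix ts assume "ts \<in> (\<Union>k\<in>{1..Suc n}. (\<lambda>(t,ts). t#ts) ` ({t\<in>S. nverts t = k} \<times> LS S (Suc n - k)))"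
  then show "ts \<in> LS S (Suc n)" by (auto simp: LS_def)
qed

lemma LS_finite: "(\<And>k. k \<le> n \<Longrightarrow> finite {t\<in>S. nverts t = k}) \<Longrightarrow> finite (LS S n)"
proof (induction n rule: less_induct)
  case (less n)
  show ?case
  proof (cases n)
    case 0 then show ?thesis by (simp add: LS_0)
  next
    case (Suc n')
    have "finite ((\<lambda>(t,ts). t#ts) ` ({t\<in>S. nverts t = k} \<times> LS S (Suc n' - k)))" if "k \<in> {1..Suc n'}" for k
      using that less.prems less.IH[of "Suc n' - k"] Suc by auto
    then show ?thesis unfolding Suc LS_Suc by blast
  qed
qed

lemma LS_card:
  assumes fin: "\<And>k. finite {t\<in>S. nverts t = k}"
  shows "card (LS S (Suc n)) = (\<Sum>k=1..Suc n. card {t\<in>S. nverts t = k} * card (LS S (Suc n - k)))"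
proof -
  have "card (LS S (Suc n)) = (\<Sum>k\<in>{1..Suc n}. card ((\<lambda>(t,ts). t#ts) ` ({t\<in>S. nverts t = k} \<times> LS S (Suc n - k))))"
    unfolding LS_Suc
  proof (rule card_UN_disjoint)
    show "\<forall>i\<in>{1..Suc n}. finite ((\<lambda>(t,ts). t#ts) ` ({t\<in>S. nverts t = i} \<times> LS S (Suc n - i)))"
      using fin LS_finite fin by blast
  qed auto
  also have "\<dots> = (\<Sum>k=1..Suc n. card {t\<in>S. nverts t = k} * card (LS S (Suc n - k)))"
  proof (intro sum.cong refl)
    fix k
    have "inj_on (\<lambda>(t,ts). t#ts) ({t\<in>S. nverts t = k} \<times> LS S (Suc n - k))"
      by (auto simp: inj_on_def)
    then show "card ((\<lambda>(t,ts). t#ts) ` ({t\<in>S. nverts t = k} \<times> LS S (Suc n - k))) =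
          card {t\<in>S. nverts t = k} * card (LS S (Suc n - k))"
      by (simp add: card_image card_cartesian_product)
  qed
  finally show ?thesis .
qed




definition Sc :: "nat \<Rightarrow> (nat \<Rightarrow> nat \<Rightarrow> bool) \<Rightarrow> nat \<Rightarrow> nat ptree set" where
  "Sc N A c = {t. A_colored N A t \<and> A c (root_label t)}"

lemma root_set:
  assumes "c \<in> {1..N}"
  shows "{T. A_colored N A T \<and> root_label T = c \<and> nverts T = Suc n} = PNode c ` LS (Sc N A c) n"
proof (intro equalityI subsetI)
  fix T assume "T \<in> {T. A_colored N A T \<and> root_label T = c \<and> nverts T = Suc n}"
  then obtain ts where "T = PNode c ts" "set ts \<subseteq> Sc N A c" "sum_list (map nverts ts) = n"
    by (cases T) (auto simp: Sc_def)
  then show "T \<in> PNode c ` LS (Sc N A c) n" by (auto simp: LS_def)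
next
  fix T assume "T \<in> PNode c ` LS (Sc N A c) n"
  then show "T \<in> {T. A_colored N A T \<and> root_label T = c \<and> nverts T = Suc n}"
    using assms by (auto simp: LS_def Sc_def)
qed

lemma root_set_0: "{T. A_colored N A T \<and> root_label T = c \<and> nverts T = 0} = {}"
proof -
  have "nverts T \<noteq> 0" for T :: "nat ptree" using nverts_pos[of T] by linarith
  thus ?thesis by auto
qed

lemma CT_split: "{T. A_colored N A T \<and> nverts T = n} =
   (\<Union>c\<in>{1..N}. {T. A_colored N A T \<and> root_label T = c \<and> nverts T = n})"
proof -
  have "root_label T \<in> {1..N}" if "A_colored N A T" for T
    using that by (cases T) auto
  thus ?thesis by auto
qed

lemma CT_finite: "finite {T. A_colored N A T \<and> nverts T = n}"
proof (induction n rule: less_induct)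
  case (less n)
  show ?case
  proof (cases n)
    case 0
    have "nverts T \<noteq> 0" for T :: "nat ptree" using nverts_pos[of T] by linarith
    then have E: "{T. A_colored N A T \<and> nverts T = 0} = {}" by auto
    show ?thesis unfolding 0 E by (rule finite.emptyI)
  next
    case (Suc n')
    have "finite (LS (Sc N A c) n')" for c
    proof (rule LS_finite)
      fix k assume "k \<le> n'"
      then have "finite {T. A_colored N A T \<and> nverts T = k}" using less.IH Suc by auto
      then show "finite {t \<in> Sc N A c. nverts t = k}"
        by (rule rev_finite_subset) (auto simp: Sc_def)
    qed
    then show ?thesis unfolding Suc CT_split[of N A "Suc n'"] using root_set by auto
  qed
qed

lemma Sc_finite: "finite {t \<in> Sc N A c. nverts t = k}"
  by (rule rev_finite_subset[OF CT_finite[of N A k]]) (auto simp: Sc_def)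

lemma t_root_Suc:
  assumes "c \<in> {1..N}"
  shows "t_A_root N A c (Suc n) = card (LS (Sc N A c) n)"
proof -
  have "inj_on (PNode c) (LS (Sc N A c) n)" by (auto simp: inj_on_def)
  then show ?thesis unfolding t_A_root_def root_set[OF assms] by (simp add: card_image)
qed

lemma t_root_0: "t_A_root N A c 0 = 0"
  unfolding t_A_root_def root_set_0 by simp

lemma card_root_in:
  assumes "finite C"
  shows "card {T. A_colored N A T \<and> root_label T \<in> C \<and> nverts T = n} = (\<Sum>c\<in>C. t_A_root N A c n)"
proof -
  have "{T. A_colored N A T \<and> root_label T \<in> C \<and> nverts T = n} =
     (\<Union>c\<in>C. {T. A_colored N A T \<and> root_label T = c \<and> nverts T = n})" by auto
  moreover have "card (\<Union>c\<in>C. {T. A_colored N A T \<and> root_label T = c \<and> nverts T = n}) = (\<Sum>c\<in>C. t_A_root N A c n)"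
    unfolding t_A_root_def
  proof (rule card_UN_disjoint[OF assms])
    show "\<forall>i\<in>C. finite {T. A_colored N A T \<and> root_label T = i \<and> nverts T = n}"
      using CT_finite[of N A n] by (auto intro: rev_finite_subset)
  qed auto
  ultimately show ?thesis by simp
qed

lemma t_A_sum: "t_A N A n = (\<Sum>c\<in>{1..N}. t_A_root N A c n)"
proof -
  have "{T. A_colored N A T \<and> nverts T = n} = {T. A_colored N A T \<and> root_label T \<in> {1..N} \<and> nverts T = n}"
    using CT_split[of N A n] by auto
  then show ?thesis unfolding t_A_def using card_root_in[of "{1..N}" N A n] by simp
qed





definition cntF :: "nat ptree set \<Rightarrow> real fps" where
  "cntF S = Abs_fps (\<lambda>k. real (card {t\<in>S. nverts t = k}))"
definition LF :: "nat ptree set \<Rightarrow> real fps" where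
  "LF S = Abs_fps (\<lambda>k. real (card (LS S k)))"

lemma LF_eq:
  assumes fin: "\<And>k. finite {t\<in>S. nverts t = k}"
  shows "LF S = 1 + cntF S * LF S"
proof (rule fps_ext)
  fix n
  have c0: "{t\<in>S. nverts t = 0} = {}" using nverts_pos by (metis (mono_tags, lifting) empty_Collect_eq not_one_le_zero)
  show "LF S $ n = (1 + cntF S * LF S) $ n"
  proof (cases n)
    case 0 then show ?thesis by (simp add: LF_def cntF_def LS_0 c0 fps_mult_nth)
  next
    case (Suc n')
    have "(cntF S * LF S) $ Suc n' = (\<Sum>i=0..Suc n'. cntF S $ i * LF S $ (Suc n' - i))"
      by (simp add: fps_mult_nth)
    also have "\<dots> = (\<Sum>i=1..Suc n'. cntF S $ i * LF S $ (Suc n' - i))"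
      by (subst sum.atLeast_Suc_atMost) (auto simp: cntF_def c0)
    also have "\<dots> = real (card (LS S (Suc n')))"
      by (simp add: LS_card[OF fin] cntF_def LF_def)
    finally show ?thesis using Suc by (simp add: LF_def)
  qed
qed

lemma Sc_low: "c \<in> {1..l} \<Longrightarrow> Sc (l+m) (A_lm l m) c = {t. A_colored (l+m) (A_lm l m) t}"
  by (auto simp: Sc_def A_lm_def)

lemma Sc_high: "c > l \<Longrightarrow> Sc (l+m) (A_lm l m) c = {t. A_colored (l+m) (A_lm l m) t \<and> root_label t \<in> {1..l}}"
proof -
  have "root_label t \<ge> 1" if "A_colored N A t" for N A t using that by (cases t) auto
  moreover assume "c > l"
  ultimately show ?thesis by (auto simp: Sc_def A_lm_def)
qed

lemma t_root_low:
  assumes "c \<in> {1..l}"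
  shows "real (t_A_root (l+m) (A_lm l m) c n) = (fps_X * LF {t. A_colored (l+m) (A_lm l m) t}) $ n"
  using assms by (cases n) (auto simp: t_root_0 t_root_Suc Sc_low LF_def)

lemma t_root_high:
  assumes "c \<in> {l+1..l+m}"
  shows "real (t_A_root (l+m) (A_lm l m) c n) =
     (fps_X * LF {t. A_colored (l+m) (A_lm l m) t \<and> root_label t \<in> {1..l}}) $ n"
  using assms by (cases n) (auto simp: t_root_0 t_root_Suc Sc_high LF_def)

lemma cnt_CT:
  "cntF {t. A_colored (l+m) (A_lm l m) t} =
     of_nat l * (fps_X * LF {t. A_colored (l+m) (A_lm l m) t})
   + of_nat m * (fps_X * LF {t. A_colored (l+m) (A_lm l m) t \<and> root_label t \<in> {1..l}})"
proof (rule fps_ext)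
  fix n
  have "cntF {t. A_colored (l+m) (A_lm l m) t} $ n = real (t_A (l+m) (A_lm l m) n)"
    by (simp add: cntF_def t_A_def)
  also have "\<dots> = (\<Sum>c\<in>{1..l+m}. real (t_A_root (l+m) (A_lm l m) c n))"
    by (simp add: t_A_sum)
  also have "\<dots> = (\<Sum>c\<in>{1..l}. real (t_A_root (l+m) (A_lm l m) c n)) + (\<Sum>c\<in>{l+1..l+m}. real (t_A_root (l+m) (A_lm l m) c n))"
  proof -
    have e: "{1..l+m} = {1..l} \<union> {l+1..l+m}" by auto
    show ?thesis unfolding e by (rule sum.union_disjoint) auto
  qed
  also have "\<dots> = of_nat l * (fps_X * LF {t. A_colored (l+m) (A_lm l m) t}) $ n
       + of_nat m * (fps_X * LF {t. A_colored (l+m) (A_lm l m) t \<and> root_label t \<in> {1..l}}) $ n"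
    by (simp add: t_root_low t_root_high)
  finally show "cntF {t. A_colored (l+m) (A_lm l m) t} $ n = (of_nat l * (fps_X * LF {t. A_colored (l+m) (A_lm l m) t})
   + of_nat m * (fps_X * LF {t. A_colored (l+m) (A_lm l m) t \<and> root_label t \<in> {1..l}})) $ n"
    by (simp add: fps_of_nat)
qed

lemma cnt_HT:
  "cntF {t. A_colored (l+m) (A_lm l m) t \<and> root_label t \<in> {1..l}} =
     of_nat l * (fps_X * LF {t. A_colored (l+m) (A_lm l m) t})"
proof (rule fps_ext)
  fix n
  have "cntF {t. A_colored (l+m) (A_lm l m) t \<and> root_label t \<in> {1..l}} $ n
     = real (card {T. A_colored (l+m) (A_lm l m) T \<and> root_label T \<in> {1..l} \<and> nverts T = n})"
    by (simp add: cntF_def conj_assoc)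
  also have "\<dots> = (\<Sum>c\<in>{1..l}. real (t_A_root (l+m) (A_lm l m) c n))"
    using card_root_in[of "{1..l}" "l+m" "A_lm l m" n] by simp
  also have "\<dots> = of_nat l * (fps_X * LF {t. A_colored (l+m) (A_lm l m) t}) $ n"
    by (simp add: t_root_low)
  finally show "cntF {t. A_colored (l+m) (A_lm l m) t \<and> root_label t \<in> {1..l}} $ n = (of_nat l * (fps_X * LF {t. A_colored (l+m) (A_lm l m) t})) $ n"
    by (simp add: fps_of_nat)
qed





lemma alg_cubic:
  fixes u b L1 L2 :: "real fps"
  assumes "L1 = 1 + (u + of_nat m * b) * L1" "L2 = 1 + u * L2" "u = of_nat l * (fps_X * L1)" "b = fps_X * L2"
  shows "u * (1-u)^2 = fps_X * (fps_const (real l) + fps_const (real m - real l) * u)"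
proof -
  have c: "fps_const (real m - real l) = of_nat m - of_nat l" "fps_const (real l) = of_nat l"
    by (simp_all add: fps_of_nat del: fps_const_sub add: fps_const_sub[symmetric])
  show ?thesis unfolding c using assms by algebra
qed

lemma Q_inv: "(1 - fps_X) * inverse (1 - fps_X :: real fps) = 1"
  by (rule inverse_mult_eq_1') simp

lemma Q_nth: "inverse (1 - fps_X :: real fps) $ i = 1"
proof -
  have "inverse (1 - fps_X :: real fps) = Abs_fps (\<lambda>n. 1)"
    using fps_inverse_gp'[where ?'a = real] fps_inverse_idempotent[of "Abs_fps (\<lambda>n. 1::real)"]
    by simp
  thus ?thesis by simp
qed

lemma Qpow_nth: "(inverse (1 - fps_X :: real fps) ^ Suc r) $ i = real ((r + i) choose i)"
proof (induction r arbitrary: i)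
  case 0
  then show ?case by (simp add: Q_nth)
next
  case (Suc r)
  have "(inverse (1 - fps_X :: real fps) ^ Suc (Suc r)) $ i
      = (inverse (1 - fps_X :: real fps) ^ Suc r * inverse (1 - fps_X)) $ i"
    by (simp only: power_Suc2)
  also have "\<dots> = (\<Sum>j=0..i. real ((r + j) choose j))"
    by (simp only: fps_mult_nth Suc.IH Q_nth mult_1_right)
  also have "\<dots> = real ((Suc r + i) choose i)"
    using sum_choose_lower[of r i] by (simp add: atLeast0AtMost flip: of_nat_sum)
  finally show ?case .
qed

lemma Gpow_nth:
  "((fps_const (a::real) + fps_const c * fps_X) ^ N) $ j = real (N choose j) * a^(N-j) * c^j"
proof -
  have "(fps_const a + fps_const c * fps_X) ^ N = (fps_const c * fps_X + fps_const a) ^ N"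
    by (simp add: add.commute)
  also have "\<dots> = (\<Sum>k\<le>N. fps_const (real (N choose k) * c^k * a^(N-k)) * fps_X^k)"
    unfolding binomial_ring
    by (intro sum.cong refl) (simp add: power_mult_distrib fps_of_nat mult_ac flip: fps_const_mult)
  finally have "((fps_const a + fps_const c * fps_X) ^ N) $ j
      = (\<Sum>k\<le>N. real (N choose k) * c^k * a^(N-k) * (if j = k then 1 else 0))"
    by (simp add: fps_sum_nth)
  also have "\<dots> = real (N choose j) * a^(N-j) * c^j"
    by (cases "j \<le> N") (auto simp: if_distrib sum.delta cong: if_cong)
  finally show ?thesis .
qed

lemma GQ_nth:
  "((fps_const (a::real) + fps_const c * fps_X) ^ N * inverse (1 - fps_X) ^ Suc r) $ i
   = (\<Sum>j=0..i. real (N choose j) * a^(N-j) * c^j * real ((r + (i-j)) choose (i-j)))"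
  by (simp only: fps_mult_nth Gpow_nth Qpow_nth)

lemma main_alg:
  fixes u L2 :: "real fps" and l :: nat and c :: real
  assumes l0: "l > 0" and u0: "u $ 0 = 0"
    and cubic: "u * (1-u)^2 = fps_X * (fps_const (real l) + fps_const c * u)"
    and L2: "L2 * (1 - u) = 1"
  shows "n > 0 \<Longrightarrow> real n * u $ n = (\<Sum>j=0..n-1. real (n choose j) * real l^(n-j) * c^j * real ((2*n-1 + (n-1-j)) choose (n-1-j)))"
    and "N > 0 \<Longrightarrow> real N * L2 $ N = (\<Sum>j=0..N-1. real (N choose j) * real l^(N-j) * c^j * real ((2*N+1 + (N-1-j)) choose (N-1-j)))"
proof -
  define G :: "real fps" where "G = fps_const (real l) + fps_const c * fps_X"
  define Q :: "real fps" where "Q = inverse (1 - fps_X)"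
  define \<phi> where "\<phi> = G * Q^2"
  define w where "w = fps_X * (1 - fps_X)^2 * inverse G"
  have G0: "G $ 0 \<noteq> 0" using l0 by (simp add: G_def)
  have iG: "inverse G * G = 1" using G0 by (rule inverse_mult_eq_1)
  have iQ: "(1 - fps_X) * Q = 1" unfolding Q_def by (rule Q_inv)
  have wphi: "w * \<phi> = fps_X"
  proof -
    have "w * \<phi> = fps_X * ((1 - fps_X) * Q)^2 * (inverse G * G)"
      by (simp add: w_def \<phi>_def power_mult_distrib mult_ac)
    thus ?thesis using iG iQ by simp
  qed
  have p0: "\<phi> $ 0 \<noteq> 0" using G0 by (simp add: \<phi>_def Q_def power2_eq_square)
  have w0: "w $ 0 = 0" by (simp add: w_def)
  have w1: "w $ 1 \<noteq> 0" using arg_cong[OF wphi, of "\<lambda>f. f $ 1"] w0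
    by (auto simp: fps_mult_nth numeral_2_eq_2)
  have wG: "w * G = fps_X * (1 - fps_X)^2"
    unfolding w_def using iG by (simp add: mult_ac)
  have Gu: "G oo u = fps_const (real l) + fps_const c * u"
    unfolding G_def by (simp add: fps_compose_add_distrib fps_compose_mult_distrib[OF u0] u0)
  have "(w oo u) * (G oo u) = (fps_X * (1 - fps_X)^2) oo u"
    by (simp only: wG fps_compose_mult_distrib[OF u0, symmetric])
  also have "\<dots> = u * (1-u)^2"
    by (simp add: fps_compose_mult_distrib[OF u0] fps_compose_power[OF u0, symmetric] fps_compose_sub_distrib u0)
  also have "\<dots> = fps_X * (G oo u)" using cubic Gu by simp
  finally have "(w oo u) * (G oo u) = fps_X * (G oo u)" .
  moreover have "G oo u \<noteq> 0"
  proof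
    assume "G oo u = 0"
    then have "(G oo u) $ 0 = 0" by simp
    thus False using G0 by simp
  qed
  ultimately have woou: "w oo u = fps_X" by simp
  define v where "v = fps_inv w"
  have "v oo (w oo u) = (v oo w) oo u" by (rule fps_compose_assoc[OF u0 w0])
  then have "v = u" using fps_inv[OF w0 w1] woou u0 by (simp add: v_def)
  then have uoow: "u oo w = fps_X" using fps_inv[OF w0 w1] by (simp add: v_def)
  show "n > 0 \<Longrightarrow> real n * u $ n = (\<Sum>j=0..n-1. real (n choose j) * real l^(n-j) * c^j * real ((2*n-1 + (n-1-j)) choose (n-1-j)))"
  proof -
    assume n: "n > 0"
    have "real n * u $ n = (\<phi>^n) $ (n-1)"
      using lagrange[OF wphi p0 uoow n] by simp
    also have "\<phi>^n = G^n * inverse (1 - fps_X) ^ Suc (2*n-1)"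
      using n by (simp add: \<phi>_def Q_def power_mult_distrib flip: power_mult)
    finally show ?thesis unfolding G_def GQ_nth .
  qed
  show "N > 0 \<Longrightarrow> real N * L2 $ N = (\<Sum>j=0..N-1. real (N choose j) * real l^(N-j) * c^j * real ((2*N+1 + (N-1-j)) choose (N-1-j)))"
  proof -
    assume N: "N > 0"
    have "(L2 oo w) * (1 - fps_X) = (L2 * (1 - u)) oo w"
      by (simp add: fps_compose_mult_distrib[OF w0] fps_compose_sub_distrib uoow)
    then have "(L2 oo w) * (1 - fps_X) = 1" using L2 by simp
    then have "(L2 oo w) * (1 - fps_X) * Q = Q" by simp
    then have L2w: "L2 oo w = Q" using iQ by (simp add: mult.assoc)
    have dQ: "fps_deriv Q = Q^2" unfolding Q_def by (subst fps_inverse_deriv) simp_all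
    have "real N * L2 $ N = (fps_deriv Q * \<phi>^N) $ (N-1)"
      using lagrange[OF wphi p0 L2w N] by simp
    also have "fps_deriv Q * \<phi>^N = G^N * inverse (1 - fps_X) ^ Suc (2*N+1)"
      unfolding dQ \<phi>_def by (simp add: Q_def power_mult_distrib mult_ac flip: power_mult power_add)
    finally show ?thesis unfolding G_def GQ_nth .
  qed
qed





lemma R1:
  fixes c :: real and l :: nat
  assumes n: "n > 0"
  shows "real l * (\<Sum>k=1..n. c ^ (n-k) * real l ^ (k-1) * real (n choose k) * real ((2*n+k-2) choose (k-1)))
       = (\<Sum>j=0..n-1. real (n choose j) * real l^(n-j) * c^j * real ((2*n-1 + (n-1-j)) choose (n-1-j)))"
  unfolding sum_distrib_left
proof (rule sum.reindex_bij_witness[where i="\<lambda>j. n - j" and j="\<lambda>k. n - k"])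
  fix k assume k: "k \<in> {1..n}"
  have e1: "real l * (c ^ (n-k) * real l ^ (k-1) * real (n choose k) * real ((2*n+k-2) choose (k-1)))
     = c ^ (n-k) * real l ^ k * real (n choose k) * real ((2*n+k-2) choose (k-1))"
    using k by (cases k) auto
  have e2: "n choose (n-k) = n choose k" using k by (simp add: binomial_symmetric[symmetric])
  have e3: "2*n-1 + (n-1-(n-k)) = 2*n+k-2" "n-1-(n-k) = k-1" "n - (n-k) = k" "2*n-1 + (k-1) = 2*n+k-2" using k by auto
  show "real (n choose (n-k)) * real l^(n-(n-k)) * c^(n-k) * real ((2*n-1 + (n-1-(n-k))) choose (n-1-(n-k)))
     = real l * (c ^ (n-k) * real l ^ (k-1) * real (n choose k) * real ((2*n+k-2) choose (k-1)))"
    unfolding e1 e2 e3 by simp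
qed (use n in auto)

lemma R2:
  fixes c :: real and l :: nat
  assumes n: "n \<ge> 2"
  shows "(\<Sum>k=1..n-1. c ^ (n-k-1) * real l ^ k * real ((n-1) choose k) * real ((2*n+k-2) choose (k-1)))
       = (\<Sum>j=0..(n-1)-1. real ((n-1) choose j) * real l^((n-1)-j) * c^j * real ((2*(n-1)+1 + ((n-1)-1-j)) choose ((n-1)-1-j)))"
proof (rule sum.reindex_bij_witness[where i="\<lambda>j. (n-1) - j" and j="\<lambda>k. (n-1) - k"])
  fix k assume k: "k \<in> {1..n-1}"
  have e2: "(n-1) choose (n-1-k) = (n-1) choose k" using k binomial_symmetric[of k "n-1"] by simp
  have e3: "2*(n-1)+1 + ((n-1)-1-((n-1)-k)) = 2*n+k-2" "(n-1)-1-((n-1)-k) = k-1" "(n-1) - ((n-1)-k) = k"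
     "n-k-1 = n-1-k" "2*(n-1)+1 + (k-1) = 2*n+k-2" using k n by auto
  show "real ((n-1) choose ((n-1)-k)) * real l^((n-1)-((n-1)-k)) * c^((n-1)-k) * real ((2*(n-1)+1 + ((n-1)-1-((n-1)-k))) choose ((n-1)-1-((n-1)-k)))
     = c ^ (n-k-1) * real l ^ k * real ((n-1) choose k) * real ((2*n+k-2) choose (k-1))"
    unfolding e2 e3 by simp
qed (use n in auto)

lemma final_alg:
  fixes l m n :: nat
  assumes n: "n \<ge> 2"
  defines "c \<equiv> real m - real l"
  shows "real l * (1 / real n * (\<Sum>k=1..n. c ^ (n-k) * real l ^ (k-1) * real (n choose k) * real ((2*n+k-2) choose (k-1))))
       + real m * (1 / real (n-1) * (\<Sum>k=1..n-1. c ^ (n-k-1) * real l ^ k * real ((n-1) choose k) * real ((2*n+k-2) choose (k-1))))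
     = (\<Sum>k=1..n-1. ((2*real m - real l) * real n - real m * real k + (real l - real m))
                             / (real n * (real n - 1))
                          * c ^ (n-k-1) * real l ^ k
                          * real (n choose k) * real ((2*n+k-2) choose (k-1)))
            + 1 / real n * real l ^ n * real ((3*n-2) choose (n-1))"
proof -
  define X where "X k = c ^ (n-k-1) * real l ^ k * real (n choose k) * real ((2*n+k-2) choose (k-1))" for k
  obtain n' where n': "n = Suc n'" using n by (cases n) auto
  have S1: "real l * (\<Sum>k=1..n. c ^ (n-k) * real l ^ (k-1) * real (n choose k) * real ((2*n+k-2) choose (k-1)))
      = (\<Sum>k=1..n-1. c * X k) + real l ^ n * real ((3*n-2) choose (n-1))"
  proof -
    have "real l * (\<Sum>k=1..n. c ^ (n-k) * real l ^ (k-1) * real (n choose k) * real ((2*n+k-2) choose (k-1)))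
        = (\<Sum>k=1..n. c ^ (n-k) * real l ^ k * real (n choose k) * real ((2*n+k-2) choose (k-1)))"
      unfolding sum_distrib_left
      by (intro sum.cong refl) (auto simp: power_eq_if)
    also have "\<dots> = (\<Sum>k=1..n-1. c ^ (n-k) * real l ^ k * real (n choose k) * real ((2*n+k-2) choose (k-1)))
        + real l ^ n * real ((3*n-2) choose (n-1))"
    proof -
      have "2*n+n-2 = 3*n-2" by simp
      then show ?thesis unfolding n' by (simp add: sum.cl_ivl_Suc)
    qed
    also have "(\<Sum>k=1..n-1. c ^ (n-k) * real l ^ k * real (n choose k) * real ((2*n+k-2) choose (k-1)))
        = (\<Sum>k=1..n-1. c * X k)"
    proof (intro sum.cong refl)
      fix k assume "k \<in> {1..n-1}"
      then have "n - k = Suc (n-k-1)" by auto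
      then show "c ^ (n-k) * real l ^ k * real (n choose k) * real ((2*n+k-2) choose (k-1)) = c * X k"
        unfolding X_def by (simp add: mult_ac)
    qed
    finally show ?thesis .
  qed
  have S2: "(\<Sum>k=1..n-1. c ^ (n-k-1) * real l ^ k * real ((n-1) choose k) * real ((2*n+k-2) choose (k-1)))
      = (\<Sum>k=1..n-1. X k * (real n - real k) / real n)"
  proof (intro sum.cong refl)
    fix k assume k: "k \<in> {1..n-1}"
    have "real (n - k) * real (n choose k) = real n * real ((n-1) choose k)"
      by (metis binomial_absorb_comp of_nat_mult)
    then have "real ((n-1) choose k) = real (n choose k) * (real n - real k) / real n"
    proof -
      have "k \<le> n" using k by auto
      then have "real (n-k) = real n - real k" by (simp add: of_nat_diff)
      then show ?thesis using \<open>real (n - k) * _ = _\<close> n by (simp add: field_simps)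
    qed
    then show "c ^ (n-k-1) * real l ^ k * real ((n-1) choose k) * real ((2*n+k-2) choose (k-1)) = X k * (real n - real k) / real n"
      unfolding X_def by simp
  qed
  have n0: "real n \<noteq> 0" "real n - 1 \<noteq> 0" "real (n-1) = real n - 1" using n by auto
  have "real l * (1 / real n * (\<Sum>k=1..n. c ^ (n-k) * real l ^ (k-1) * real (n choose k) * real ((2*n+k-2) choose (k-1))))
       + real m * (1 / real (n-1) * (\<Sum>k=1..n-1. c ^ (n-k-1) * real l ^ k * real ((n-1) choose k) * real ((2*n+k-2) choose (k-1))))
     = 1 / real n * ((\<Sum>k=1..n-1. c * X k) + real l ^ n * real ((3*n-2) choose (n-1)))
       + real m * (1 / (real n - 1) * (\<Sum>k=1..n-1. X k * (real n - real k) / real n))"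
    using S1 S2 n0 by (simp add: mult_ac)
  also have "\<dots> = (\<Sum>k=1..n-1. (c / real n + real m * (real n - real k) / (real n * (real n - 1))) * X k)
       + 1 / real n * real l ^ n * real ((3*n-2) choose (n-1))"
    by (simp add: sum_distrib_left sum_distrib_right sum.distrib field_simps sum_divide_distrib[symmetric] add_divide_distrib)
  also have "(\<Sum>k=1..n-1. (c / real n + real m * (real n - real k) / (real n * (real n - 1))) * X k)
     = (\<Sum>k=1..n-1. ((2*real m - real l) * real n - real m * real k + (real l - real m))
                             / (real n * (real n - 1))
                          * c ^ (n-k-1) * real l ^ k
                          * real (n choose k) * real ((2*n+k-2) choose (k-1)))"
  proof (intro sum.cong refl)
    fix k
    have "c / real n + real m * (real n - real k) / (real n * (real n - 1))
        = ((2*real m - real l) * real n - real m * real k + (real l - real m)) / (real n * (real n - 1))"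
      using n0 unfolding c_def by (simp add: field_simps)
    then show "(c / real n + real m * (real n - real k) / (real n * (real n - 1))) * X k =
      ((2*real m - real l) * real n - real m * real k + (real l - real m)) / (real n * (real n - 1))
                          * c ^ (n-k-1) * real l ^ k * real (n choose k) * real ((2*n+k-2) choose (k-1))"
      unfolding X_def by (simp add: mult_ac)
  qed
  finally show ?thesis .
qed





theorem theorem35:
  fixes l m n :: nat
  assumes "l > 0" "m > 0" "n > 0"
  shows "(\<forall>i\<in>{1..l}. real (t_A_root (l+m) (A_lm l m) i n) =
            1 / real n * (\<Sum>k=1..n. (real m - real l) ^ (n-k) * real l ^ (k-1)
                             * real (n choose k) * real ((2*n+k-2) choose (k-1))))
       \<and> (n \<ge> 2 \<longrightarrow> (\<forall>i\<in>{l+1..l+m}. real (t_A_root (l+m) (A_lm l m) i n) =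
            1 / real (n-1) * (\<Sum>k=1..n-1. (real m - real l) ^ (n-k-1) * real l ^ k
                             * real ((n-1) choose k) * real ((2*n+k-2) choose (k-1)))))
       \<and> (n \<ge> 2 \<longrightarrow> real (t_A (l+m) (A_lm l m) n) =
            (\<Sum>k=1..n-1. ((2*real m - real l) * real n - real m * real k + (real l - real m))
                             / (real n * (real n - 1))
                          * (real m - real l) ^ (n-k-1) * real l ^ k
                          * real (n choose k) * real ((2*n+k-2) choose (k-1)))
            + 1 / real n * real l ^ n * real ((3*n-2) choose (n-1)))"
proof -
  note l0 = assms(1) and n0 = assms(3)
  define c where "c = real m - real l"
  define CT where "CT = {t. A_colored (l+m) (A_lm l m) t}"
  define HT where "HT = {t. A_colored (l+m) (A_lm l m) t \<and> root_label t \<in> {1..l}}"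
  define L1 where "L1 = LF CT"
  define L2 where "L2 = LF HT"
  define u where "u = of_nat l * (fps_X * L1)"
  define b where "b = fps_X * L2"
  have finCT: "finite {t\<in>CT. nverts t = k}" for k
    using CT_finite[of "l+m" "A_lm l m" k] unfolding CT_def by simp
  have finHT: "finite {t\<in>HT. nverts t = k}" for k
    using CT_finite[of "l+m" "A_lm l m" k] unfolding HT_def by (auto intro: rev_finite_subset)
  have cCT: "cntF CT = of_nat l * (fps_X * LF CT) + of_nat m * (fps_X * LF HT)"
    unfolding CT_def HT_def by (rule cnt_CT)
  have cHT: "cntF HT = of_nat l * (fps_X * LF CT)"
    unfolding CT_def HT_def by (rule cnt_HT)
  have hL1: "L1 = 1 + (u + of_nat m * b) * L1"
    using LF_eq[OF finCT] cCT unfolding L1_def L2_def u_def b_def by simp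
  have hL2: "L2 = 1 + u * L2"
    using LF_eq[OF finHT] cHT unfolding L2_def u_def L1_def by simp
  have cubic: "u * (1-u)^2 = fps_X * (fps_const (real l) + fps_const c * u)"
    unfolding c_def by (rule alg_cubic[OF hL1 hL2 u_def b_def])
  have u0: "u $ 0 = 0" by (simp add: u_def fps_of_nat)
  have L2inv: "L2 * (1 - u) = 1" using hL2 by algebra
  have unth: "u $ k = real l * (fps_X * L1) $ k" for k by (simp add: u_def fps_of_nat)
  define S1 where "S1 = (\<Sum>k=1..n. c ^ (n-k) * real l ^ (k-1) * real (n choose k) * real ((2*n+k-2) choose (k-1)))"
  define S2 where "S2 = (\<Sum>k=1..n-1. c ^ (n-k-1) * real l ^ k * real ((n-1) choose k) * real ((2*n+k-2) choose (k-1)))"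
  have P1: "(fps_X * L1) $ n = 1 / real n * S1"
  proof -
    have "real n * u $ n = real l * S1"
      using main_alg(1)[OF l0 u0 cubic L2inv n0] R1[OF n0, of l c] unfolding S1_def by simp
    then have "real l * (real n * (fps_X * L1) $ n) = real l * S1" by (simp add: unth mult_ac)
    then have "real n * (fps_X * L1) $ n = S1" using l0 by simp
    then show ?thesis using n0 by (simp add: field_simps)
  qed
  have P2: "(fps_X * L2) $ n = 1 / real (n-1) * S2" if n2: "n \<ge> 2"
  proof -
    have N0: "n - 1 > 0" using n2 by simp
    have "real (n-1) * L2 $ (n-1) = S2"
      using main_alg(2)[OF l0 u0 cubic L2inv N0] R2[OF n2, of c l] unfolding S2_def by simp
    then show ?thesis using N0 n0 by (simp add: field_simps)
  qed
  have low: "\<forall>i\<in>{1..l}. real (t_A_root (l+m) (A_lm l m) i n) = 1 / real n * S1"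
    using t_root_low[of _ l m n] P1 unfolding L1_def CT_def by simp
  have high: "n \<ge> 2 \<longrightarrow> (\<forall>i\<in>{l+1..l+m}. real (t_A_root (l+m) (A_lm l m) i n) = 1 / real (n-1) * S2)"
    using t_root_high[of _ l m n] P2 unfolding L2_def HT_def by simp
  have tot: "n \<ge> 2 \<longrightarrow> real (t_A (l+m) (A_lm l m) n) =
            (\<Sum>k=1..n-1. ((2*real m - real l) * real n - real m * real k + (real l - real m))
                             / (real n * (real n - 1))
                          * c ^ (n-k-1) * real l ^ k
                          * real (n choose k) * real ((2*n+k-2) choose (k-1)))
            + 1 / real n * real l ^ n * real ((3*n-2) choose (n-1))" (is "_ \<longrightarrow> _ = ?R")
  proof
    assume n2: "n \<ge> 2"
    have "real (t_A (l+m) (A_lm l m) n) = cntF CT $ n" by (simp add: cntF_def t_A_def CT_def)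
    also have "\<dots> = real l * (fps_X * L1) $ n + real m * (fps_X * L2) $ n"
      using cCT unfolding L1_def L2_def by (simp add: fps_of_nat)
    also have "\<dots> = real l * (1 / real n * S1) + real m * (1 / real (n-1) * S2)"
      using P1 P2[OF n2] by simp
    also have "\<dots> = ?R" unfolding S1_def S2_def c_def by (rule final_alg[OF n2])
    finally show "real (t_A (l+m) (A_lm l m) n) = ?R" .
  qed
  show ?thesis using low high tot unfolding S1_def S2_def c_def by blast
qed



end
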